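(* Let $Z$ be a domain, $\pi$ a probability distribution on $Z$, $0\le a\le b$, $\mathcal{F}$ a family of functions from $Z$ to $[a,b]$, $p\in(0,1)$ and $n\ge1$. The function $g:Z^n\to\mathbb{R}$, \[g(X_1,\dots,X_n)=\sup_{f\in\mathcal{F}}\frac{\mathbb{E}_\pi[f]-\frac1n\sum_{i=1}^n f(X_i)}{\max\{p,\mathbb{E}_\pi[f]\}},\] satisfies the bounded difference inequality with constants $c_i=\frac{|b-a|}{np}$, $1\le i\le n$.
   Context: A function $g:\mathcal{X}^n\to\mathbb{R}$ satisfies the bounded difference inequality with nonnegative constants $c_1,\dots,c_n$ if for every $i$, $\sup_{x_1,\dots,x_n,x_i'\in\mathcal{X}}|g(x_1,\dots,x_n)-g(x_1,\dots,x_{i-1},x_i',x_{i+1},\dots,x_n)|\le c_i$. *)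

theory Defs
  imports "HOL-Probability.Probability"
begin

text \<open>Bounded difference inequality for g : X^n -> R, where points of X^n are
  represented as functions x :: nat => 'a, coordinates indexed by 0..n-1.\<close>
definition bounded_difference ::
  "'a set \<Rightarrow> nat \<Rightarrow> ((nat \<Rightarrow> 'a) \<Rightarrow> real) \<Rightarrow> (nat \<Rightarrow> real) \<Rightarrow> bool" where
  "bounded_difference X n g c \<longleftrightarrow>
     (\<forall>i<n. \<forall>x y. (\<forall>j<n. x j \<in> X) \<longrightarrow> y \<in> X \<longrightarrow> \<bar>g x - g (x(i := y))\<bar> \<le> c i)"

end

theory Submission
  imports Defs
begin

lemma sup_diff_bound:
  fixes g h :: "'b \<Rightarrow> real"
  assumes ne: "A \<noteq> {}" and bg: "\<And>f. f \<in> A \<Longrightarrow> g f \<le> K" and bh: "\<And>f. f \<in> A \<Longrightarrow> h f \<le> K"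
    and d: "\<And>f. f \<in> A \<Longrightarrow> \<bar>g f - h f\<bar> \<le> c"
  shows "\<bar>(SUP f\<in>A. g f) - (SUP f\<in>A. h f)\<bar> \<le> c"
proof -
  have bdg: "bdd_above (g ` A)" using bg by (intro bdd_aboveI2) auto
  have bdh: "bdd_above (h ` A)" using bh by (intro bdd_aboveI2) auto
  have 1: "(SUP f\<in>A. g f) \<le> (SUP f\<in>A. h f) + c"
  proof (rule cSUP_least[OF ne])
    fix f assume f: "f \<in> A"
    have "h f \<le> (SUP f\<in>A. h f)" by (rule cSUP_upper[OF f bdh])
    then show "g f \<le> (SUP f\<in>A. h f) + c" using d[OF f] by linarith
  qed
  have 2: "(SUP f\<in>A. h f) \<le> (SUP f\<in>A. g f) + c"
  proof (rule cSUP_least[OF ne])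
    fix f assume f: "f \<in> A"
    have "g f \<le> (SUP f\<in>A. g f)" by (rule cSUP_upper[OF f bdg])
    then show "h f \<le> (SUP f\<in>A. g f) + c" using d[OF f] by linarith
  qed
  show ?thesis using 1 2 by linarith
qed

theorem lemma5:
  fixes \<pi> :: "'z measure" and F :: "('z \<Rightarrow> real) set"
    and a b p :: real and n :: nat
  assumes "prob_space \<pi>"
    and "0 \<le> a" and "a \<le> b"
    and "\<And>f. f \<in> F \<Longrightarrow> f \<in> borel_measurable \<pi>"
    and "\<And>f z. f \<in> F \<Longrightarrow> z \<in> space \<pi> \<Longrightarrow> a \<le> f z \<and> f z \<le> b"
    and "0 < p" and "p < 1" and "1 \<le> n"
  shows "bounded_difference (space \<pi>) n
           (\<lambda>x. SUP f\<in>F. ((\<integral>z. f z \<partial>\<pi>) - (1 / real n) * (\<Sum>i<n. f (x i)))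
                          / max p (\<integral>z. f z \<partial>\<pi>))
           (\<lambda>i. \<bar>b - a\<bar> / (real n * p))"
  unfolding bounded_difference_def
proof (intro allI impI)
  fix i x y
  assume i: "i < n" and x: "\<forall>j<n. x j \<in> space \<pi>" and y: "y \<in> space \<pi>"
  let ?M = "\<lambda>f. max p (\<integral>z. f z \<partial>\<pi>)"
  let ?g = "\<lambda>x f. ((\<integral>z. f z \<partial>\<pi>) - (1 / real n) * (\<Sum>i<n. f (x i))) / ?M f"
  have xy: "\<forall>j<n. (x(i:=y)) j \<in> space \<pi>" using x y by auto
  have npos: "real n > 0" using assms(8) by simp
  have bnd: "?g w f \<le> 1" if f: "f \<in> F" and w: "\<forall>j<n. w j \<in> space \<pi>" for w f
  proof -
    have "0 \<le> (\<Sum>i<n. f (w i))" using w assms(5)[OF f] assms(2)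
      by (intro sum_nonneg) (meson lessThan_iff order_trans)
    hence "(1 / real n) * (\<Sum>i<n. f (w i)) \<ge> 0" using npos by simp
    hence "(\<integral>z. f z \<partial>\<pi>) - (1 / real n) * (\<Sum>i<n. f (w i)) \<le> ?M f" by linarith
    moreover have "?M f > 0" using assms(6) by simp
    ultimately show ?thesis by simp
  qed
  show "\<bar>(SUP f\<in>F. ?g x f) - (SUP f\<in>F. ?g (x(i:=y)) f)\<bar> \<le> \<bar>b - a\<bar> / (real n * p)"
  proof (cases "F = {}")
    case True then show ?thesis using npos assms(6) by simp
  next
    case False
    show ?thesis
    proof (rule sup_diff_bound[OF False])
      fix f assume f: "f \<in> F"
      show "?g x f \<le> 1" using bnd[OF f x] .
      show "?g (x(i:=y)) f \<le> 1" using bnd[OF f xy] .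
      have Mp: "?M f \<ge> p" by simp
      have Mpos: "?M f > 0" using assms(6) by simp
      have s: "(\<Sum>j<n. f ((x(i:=y)) j)) = (\<Sum>j<n. f (x j)) - f (x i) + f y"
      proof -
        have "(\<Sum>j<n. f ((x(i:=y)) j)) = f y + (\<Sum>j\<in>{..<n}-{i}. f (x j))"
          using i by (simp add: sum.remove[of "{..<n}" i] )
        moreover have "(\<Sum>j<n. f (x j)) = f (x i) + (\<Sum>j\<in>{..<n}-{i}. f (x j))"
          using i by (simp add: sum.remove[of "{..<n}" i])
        ultimately show ?thesis by simp
      qed
      have diff: "?g x f - ?g (x(i:=y)) f = (f y - f (x i)) / (real n * ?M f)"
        using npos Mpos unfolding s by (simp add: field_simps)
      have fb: "\<bar>f y - f (x i)\<bar> \<le> \<bar>b - a\<bar>"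
        using assms(5)[OF f y] assms(5)[OF f] x i by fastforce
      have "\<bar>f y - f (x i)\<bar> / (real n * ?M f) \<le> \<bar>b - a\<bar> / (real n * p)"
        using npos Mp assms(6) fb
        by (intro frac_le) (auto intro: mult_left_mono)
      then show "\<bar>?g x f - ?g (x(i:=y)) f\<bar> \<le> \<bar>b - a\<bar> / (real n * p)"
        unfolding diff using npos Mpos by (simp add: abs_div)
    qed
  qed
qed

end
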